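(* Let $\tilde L$ be a minimum-size counterexample. For any two meet-irreducible elements $m_1,m_2$ of $\tilde L$, there exists a join-irreducible element $j$ of $\tilde L$ with $j\le m_1$ and $j\le m_2$.
   Context: For a poset $P$, $x$ upper covers $y$ (and $y$ lower covers $x$) if $y<x$ with nothing strictly between. Join-irreducible: upper covers exactly one element; meet-irreducible: lower covers exactly one element. For $x\in P$, ${\uparrow}x=\{y: x\le y\}$. A counterexample is a finite lattice $L$ with $|L|>1$ in which every join-irreducible $j$ satisfies $|{\uparrow}j|>|L|/2$; a minimum-size counterexample is a counterexample $\tilde L$ such that no counterexample has fewer elements. *)

theory Defs
  imports Main
begin

definition is_partial_order :: "'a set \<Rightarrow> ('a \<Rightarrow> 'a \<Rightarrow> bool) \<Rightarrow> bool" where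
  "is_partial_order A le \<longleftrightarrow>
     (\<forall>x\<in>A. le x x) \<and>
     (\<forall>x\<in>A. \<forall>y\<in>A. le x y \<and> le y x \<longrightarrow> x = y) \<and>
     (\<forall>x\<in>A. \<forall>y\<in>A. \<forall>z\<in>A. le x y \<and> le y z \<longrightarrow> le x z)"

definition is_lattice :: "'a set \<Rightarrow> ('a \<Rightarrow> 'a \<Rightarrow> bool) \<Rightarrow> bool" where
  "is_lattice A le \<longleftrightarrow> is_partial_order A le \<and>
     (\<forall>x\<in>A. \<forall>y\<in>A. \<exists>s\<in>A. le x s \<and> le y s \<and> (\<forall>u\<in>A. le x u \<and> le y u \<longrightarrow> le s u)) \<and>
     (\<forall>x\<in>A. \<forall>y\<in>A. \<exists>i\<in>A. le i x \<and> le i y \<and> (\<forall>u\<in>A. le u x \<and> le u y \<longrightarrow> le u i))"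

definition finite_lattice :: "'a set \<Rightarrow> ('a \<Rightarrow> 'a \<Rightarrow> bool) \<Rightarrow> bool" where
  "finite_lattice A le \<longleftrightarrow> finite A \<and> is_lattice A le"

definition covers :: "'a set \<Rightarrow> ('a \<Rightarrow> 'a \<Rightarrow> bool) \<Rightarrow> 'a \<Rightarrow> 'a \<Rightarrow> bool" where
  "covers A le x y \<longleftrightarrow> x \<in> A \<and> y \<in> A \<and> le y x \<and> y \<noteq> x \<and>
     \<not> (\<exists>z\<in>A. le y z \<and> y \<noteq> z \<and> le z x \<and> z \<noteq> x)"

definition join_irreducible :: "'a set \<Rightarrow> ('a \<Rightarrow> 'a \<Rightarrow> bool) \<Rightarrow> 'a \<Rightarrow> bool" where
  "join_irreducible A le j \<longleftrightarrow> j \<in> A \<and> (\<exists>!y. covers A le j y)"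

definition meet_irreducible :: "'a set \<Rightarrow> ('a \<Rightarrow> 'a \<Rightarrow> bool) \<Rightarrow> 'a \<Rightarrow> bool" where
  "meet_irreducible A le m \<longleftrightarrow> m \<in> A \<and> (\<exists>!y. covers A le y m)"

definition up_set :: "'a set \<Rightarrow> ('a \<Rightarrow> 'a \<Rightarrow> bool) \<Rightarrow> 'a \<Rightarrow> 'a set" where
  "up_set A le x = {y\<in>A. le x y}"

text \<open>Counterexample (to the union-closed sets / Frankl conjecture in lattice form).\<close>
definition counterexample :: "'a set \<Rightarrow> ('a \<Rightarrow> 'a \<Rightarrow> bool) \<Rightarrow> bool" where
  "counterexample A le \<longleftrightarrow> finite_lattice A le \<and> card A > 1 \<and>
     (\<forall>j. join_irreducible A le j \<longrightarrow> 2 * card (up_set A le j) > card A)"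

text \<open>Minimum-size counterexample. Every finite lattice is isomorphic to one whose
carrier is a subset of nat, so it suffices to compare against counterexamples
on nat carriers.\<close>
definition min_counterexample :: "'a set \<Rightarrow> ('a \<Rightarrow> 'a \<Rightarrow> bool) \<Rightarrow> bool" where
  "min_counterexample A le \<longleftrightarrow> counterexample A le \<and>
     (\<forall>(B::nat set) leB. counterexample B leB \<longrightarrow> card A \<le> card B)"

end

theory Submission
  imports Defs
begin


lemma transfer_ce:
  assumes ce: "counterexample (S::'a set) le"
  shows "\<exists>(B::nat set) leB. counterexample B leB \<and> card B = card S"
proof -
  have fin: "finite S" using ce by (simp add: counterexample_def finite_lattice_def)
  obtain h :: "'a \<Rightarrow> nat" where bij: "bij_betw h S {0..<card S}"
    using ex_bij_betw_finite_nat[OF fin] by blast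
  have inj: "inj_on h S" using bij bij_betw_def by blast
  define g where "g = inv_into S h"
  have gh: "\<And>x. x \<in> S \<Longrightarrow> g (h x) = x" unfolding g_def using inj by simp
  define B where "B = h ` S"
  define leB where "leB = (\<lambda>x y. le (g x) (g y))"
  have leBh: "\<And>x y. x \<in> S \<Longrightarrow> y \<in> S \<Longrightarrow> leB (h x) (h y) = le x y"
    by (simp add: leB_def gh)
  have hinj: "\<And>x y. x \<in> S \<Longrightarrow> y \<in> S \<Longrightarrow> (h x = h y) = (x = y)"
    using inj inj_on_eq_iff by metis
  have cardB: "card B = card S" unfolding B_def using card_image[OF inj] .
  have po: "is_partial_order S le" and lat: "is_lattice S le"
    using ce by (auto simp: counterexample_def finite_lattice_def is_lattice_def)
  have exB: "\<And>x. x \<in> B \<Longrightarrow> \<exists>a\<in>S. x = h a" unfolding B_def by auto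
  have hB: "\<And>a. a \<in> S \<Longrightarrow> h a \<in> B" unfolding B_def by auto
  have poS1: "\<And>x. x\<in>S \<Longrightarrow> le x x" using po unfolding is_partial_order_def by blast
  have poS2: "\<And>x y. x\<in>S \<Longrightarrow> y\<in>S \<Longrightarrow> le x y \<Longrightarrow> le y x \<Longrightarrow> x = y"
    using po unfolding is_partial_order_def by blast
  have poS3: "\<And>x y z. x\<in>S \<Longrightarrow> y\<in>S \<Longrightarrow> z\<in>S \<Longrightarrow> le x y \<Longrightarrow> le y z \<Longrightarrow> le x z"
    using po unfolding is_partial_order_def by blast
  have latJ: "\<And>x y. x\<in>S \<Longrightarrow> y\<in>S \<Longrightarrow> \<exists>s\<in>S. le x s \<and> le y s \<and> (\<forall>u\<in>S. le x u \<and> le y u \<longrightarrow> le s u)"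
    using lat unfolding is_lattice_def by blast
  have latM: "\<And>x y. x\<in>S \<Longrightarrow> y\<in>S \<Longrightarrow> \<exists>i\<in>S. le i x \<and> le i y \<and> (\<forall>u\<in>S. le u x \<and> le u y \<longrightarrow> le u i)"
    using lat unfolding is_lattice_def by blast
  have poB: "is_partial_order B leB"
    unfolding is_partial_order_def
  proof (intro conjI ballI impI)
    fix x assume "x \<in> B" then obtain a where "a\<in>S" "x = h a" using exB by blast
    then show "leB x x" using poS1 leBh by simp
  next
    fix x y assume "x \<in> B" "y \<in> B" "leB x y \<and> leB y x"
    then obtain a b where "a\<in>S" "x = h a" "b\<in>S" "y = h b" using exB by metis
    then show "x = y" using poS2 leBh \<open>leB x y \<and> leB y x\<close> by metis
  next
    fix x y z assume "x \<in> B" "y \<in> B" "z \<in> B" "leB x y \<and> leB y z"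
    then obtain a b c where "a\<in>S" "x = h a" "b\<in>S" "y = h b" "c\<in>S" "z = h c" using exB by metis
    then show "leB x z" using poS3 leBh \<open>leB x y \<and> leB y z\<close> by metis
  qed
  have latB: "is_lattice B leB"
    unfolding is_lattice_def
  proof (intro conjI ballI poB)
    fix x y assume "x \<in> B" "y \<in> B"
    then obtain a b where ab: "a\<in>S" "x = h a" "b\<in>S" "y = h b" using exB by metis
    then obtain s where s: "s\<in>S" "le a s" "le b s" "\<forall>u\<in>S. le a u \<and> le b u \<longrightarrow> le s u"
      using latJ[OF ab(1) ab(3)] by blast
    show "\<exists>s\<in>B. leB x s \<and> leB y s \<and> (\<forall>u\<in>B. leB x u \<and> leB y u \<longrightarrow> leB s u)"
    proof (intro bexI[of _ "h s"] conjI ballI impI)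
      show "h s \<in> B" using hB s by simp
      show "leB x (h s)" using ab s leBh by simp
      show "leB y (h s)" using ab s leBh by simp
      fix u assume "u \<in> B" "leB x u \<and> leB y u"
      then obtain c where "c \<in> S" "u = h c" using exB by blast
      then show "leB (h s) u" using ab s leBh \<open>leB x u \<and> leB y u\<close> by simp
    qed
  next
    fix x y assume "x \<in> B" "y \<in> B"
    then obtain a b where ab: "a\<in>S" "x = h a" "b\<in>S" "y = h b" using exB by metis
    then obtain s where s: "s\<in>S" "le s a" "le s b" "\<forall>u\<in>S. le u a \<and> le u b \<longrightarrow> le u s"
      using latM[OF ab(1) ab(3)] by blast
    show "\<exists>s\<in>B. leB s x \<and> leB s y \<and> (\<forall>u\<in>B. leB u x \<and> leB u y \<longrightarrow> leB u s)"
    proof (intro bexI[of _ "h s"] conjI ballI impI)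
      show "h s \<in> B" using hB s by simp
      show "leB (h s) x" using ab s leBh by simp
      show "leB (h s) y" using ab s leBh by simp
      fix u assume "u \<in> B" "leB u x \<and> leB u y"
      then obtain c where "c \<in> S" "u = h c" using exB by blast
      then show "leB u (h s)" using ab s leBh \<open>leB u x \<and> leB u y\<close> by simp
    qed
  qed
  have covB: "\<And>x y. x \<in> S \<Longrightarrow> y \<in> S \<Longrightarrow> covers B leB (h x) (h y) = covers S le x y"
  proof -
    fix x y assume xy: "x \<in> S" "y \<in> S"
    have "(\<exists>z\<in>B. leB (h y) z \<and> h y \<noteq> z \<and> leB z (h x) \<and> z \<noteq> h x) =
          (\<exists>z\<in>S. le y z \<and> y \<noteq> z \<and> le z x \<and> z \<noteq> x)"
    proof
      assume "\<exists>z\<in>B. leB (h y) z \<and> h y \<noteq> z \<and> leB z (h x) \<and> z \<noteq> h x"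
      then obtain z where "z \<in> B" "leB (h y) z \<and> h y \<noteq> z \<and> leB z (h x) \<and> z \<noteq> h x" by blast
      moreover obtain c where "c \<in> S" "z = h c" using exB \<open>z \<in> B\<close> by blast
      ultimately show "\<exists>z\<in>S. le y z \<and> y \<noteq> z \<and> le z x \<and> z \<noteq> x" using xy leBh by auto
    next
      assume "\<exists>z\<in>S. le y z \<and> y \<noteq> z \<and> le z x \<and> z \<noteq> x"
      then obtain c where "c \<in> S" "le y c \<and> y \<noteq> c \<and> le c x \<and> c \<noteq> x" by blast
      then show "\<exists>z\<in>B. leB (h y) z \<and> h y \<noteq> z \<and> leB z (h x) \<and> z \<noteq> h x"
        using xy leBh hinj hB by (intro bexI[of _ "h c"]) auto
    qed
    then show "covers B leB (h x) (h y) = covers S le x y"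
      unfolding covers_def using xy leBh hinj hB by auto
  qed
  have covB2: "\<And>u v. covers B leB u v \<Longrightarrow> u \<in> B \<and> v \<in> B"
    unfolding covers_def by auto
  have upB: "\<And>x. x \<in> S \<Longrightarrow> up_set B leB (h x) = h ` up_set S le x"
  proof -
    fix x assume x: "x \<in> S"
    show "up_set B leB (h x) = h ` up_set S le x"
    proof
      show "up_set B leB (h x) \<subseteq> h ` up_set S le x"
      proof
        fix u assume "u \<in> up_set B leB (h x)"
        then have "u \<in> B" "leB (h x) u" unfolding up_set_def by auto
        then obtain c where "c \<in> S" "u = h c" using exB by blast
        then show "u \<in> h ` up_set S le x" using x leBh \<open>leB (h x) u\<close> unfolding up_set_def by auto
      qed
      show "h ` up_set S le x \<subseteq> up_set B leB (h x)"
        using x leBh hB unfolding up_set_def by auto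
    qed
  qed
  have cardup: "\<And>x. x \<in> S \<Longrightarrow> card (up_set B leB (h x)) = card (up_set S le x)"
  proof -
    fix x assume x: "x \<in> S"
    have "inj_on h (up_set S le x)" using inj_on_subset[OF inj] unfolding up_set_def by auto
    then show "card (up_set B leB (h x)) = card (up_set S le x)" using upB[OF x] card_image by metis
  qed
  have jiB: "\<And>u. join_irreducible B leB u \<Longrightarrow> \<exists>x\<in>S. u = h x \<and> join_irreducible S le x"
  proof -
    fix u assume ji: "join_irreducible B leB u"
    then obtain v where v: "covers B leB u v" and vu: "\<And>w. covers B leB u w \<Longrightarrow> w = v"
      unfolding join_irreducible_def by blast
    obtain x where x: "x \<in> S" "u = h x" using ji unfolding join_irreducible_def B_def by auto
    obtain y where y: "y \<in> S" "v = h y" using covB2[OF v] unfolding B_def by auto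
    have "covers S le x y" using covB v x y by simp
    moreover have "\<And>z. covers S le x z \<Longrightarrow> z = y"
    proof -
      fix z assume z: "covers S le x z"
      then have "z \<in> S" unfolding covers_def by auto
      then have "covers B leB u (h z)" using covB x z by simp
      then have "h z = h y" using vu y by simp
      then show "z = y" using hinj \<open>z \<in> S\<close> y by blast
    qed
    ultimately have "join_irreducible S le x" unfolding join_irreducible_def using x by blast
    then show "\<exists>x\<in>S. u = h x \<and> join_irreducible S le x" using x by blast
  qed
  have "counterexample B leB"
    unfolding counterexample_def
  proof (intro conjI allI impI)
    show "finite_lattice B leB" using fin latB unfolding finite_lattice_def B_def by simp
    show "1 < card B" using cardB ce unfolding counterexample_def by simp
    fix j assume "join_irreducible B leB j"
    then obtain x where "x \<in> S" "j = h x" "join_irreducible S le x" using jiB by blast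
    then show "card B < 2 * card (up_set B leB j)"
      using ce cardB cardup unfolding counterexample_def by simp
  qed
  then show ?thesis using cardB by blast
qed


lemma po_facts:
  assumes "is_partial_order A le"
  shows po_refl: "\<And>x. x\<in>A \<Longrightarrow> le x x"
    and po_antisym: "\<And>x y. x\<in>A \<Longrightarrow> y\<in>A \<Longrightarrow> le x y \<Longrightarrow> le y x \<Longrightarrow> x = y"
    and po_trans: "\<And>x y z. x\<in>A \<Longrightarrow> y\<in>A \<Longrightarrow> z\<in>A \<Longrightarrow> le x y \<Longrightarrow> le y z \<Longrightarrow> le x z"
  using assms unfolding is_partial_order_def by blast+

lemma po_max:
  assumes po: "is_partial_order A le" and "finite X" "X \<noteq> {}" "X \<subseteq> A"
  shows "\<exists>x\<in>X. \<forall>y\<in>X. le x y \<longrightarrow> y = x"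
  using assms(2-4)
proof (induction X rule: finite_ne_induct)
  case (singleton x) then show ?case by auto
next
  case (insert a X)
  then obtain m where m: "m\<in>X" "\<forall>y\<in>X. le m y \<longrightarrow> y = m" by auto
  have aA: "a \<in> A" and XA: "X \<subseteq> A" using insert by auto
  show ?case
  proof (cases "le m a")
    case True
    have "\<forall>y\<in>insert a X. le a y \<longrightarrow> y = a"
    proof (intro ballI impI)
      fix y assume y: "y \<in> insert a X" "le a y"
      show "y = a"
      proof (cases "y = a")
        case False
        then have yX: "y \<in> X" using y by auto
        have "le m y" using po_trans[OF po, of m a y] True y yX m XA aA by auto
        then have "y = m" using m yX by auto
        then show ?thesis using po_antisym[OF po, of a m] True y aA m XA by auto
      qed
    qed
    then show ?thesis by blast
  next
    case False
    then show ?thesis using m by auto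
  qed
qed

lemma po_flip: "is_partial_order A le \<Longrightarrow> is_partial_order A (\<lambda>x y. le y x)"
  unfolding is_partial_order_def by blast

lemma po_min:
  assumes po: "is_partial_order A le" and "finite X" "X \<noteq> {}" "X \<subseteq> A"
  shows "\<exists>x\<in>X. \<forall>y\<in>X. le y x \<longrightarrow> y = x"
  using po_max[OF po_flip[OF po] assms(2-4)] by simp

lemma cover_below:
  assumes po: "is_partial_order A le" and fin: "finite A"
    and x: "x\<in>A" and y: "y\<in>A" and yx: "le y x" "y \<noteq> x"
  shows "\<exists>z. covers A le x z \<and> le y z"
proof -
  define X where "X = {z\<in>A. le y z \<and> le z x \<and> z \<noteq> x}"
  have "y \<in> X" unfolding X_def using y yx po_refl[OF po] by auto
  then obtain z where z: "z\<in>X" "\<forall>w\<in>X. le z w \<longrightarrow> w = z"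
    using po_max[OF po, of X] fin unfolding X_def by (metis (no_types, lifting) empty_iff finite_subset mem_Collect_eq subsetI)
  have zA: "z \<in> A" "le y z" "le z x" "z \<noteq> x" using z unfolding X_def by auto
  have "covers A le x z"
    unfolding covers_def
  proof (intro conjI x zA notI)
    assume "\<exists>w\<in>A. le z w \<and> z \<noteq> w \<and> le w x \<and> w \<noteq> x"
    then obtain w where w: "w\<in>A" "le z w" "z \<noteq> w" "le w x" "w \<noteq> x" by blast
    have "le y w" using po_trans[OF po, of y z w] w zA y by auto
    then have "w \<in> X" unfolding X_def using w by auto
    then show False using z w by auto
  qed
  then show ?thesis using zA by blast
qed

lemma cover_above:
  assumes po: "is_partial_order A le" and fin: "finite A"
    and x: "x\<in>A" and y: "y\<in>A" and yx: "le y x" "y \<noteq> x"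
  shows "\<exists>z. covers A le z y \<and> le z x"
proof -
  define X where "X = {z\<in>A. le y z \<and> y \<noteq> z \<and> le z x}"
  have "x \<in> X" unfolding X_def using x yx po_refl[OF po] by auto
  then obtain z where z: "z\<in>X" "\<forall>w\<in>X. le w z \<longrightarrow> w = z"
    using po_min[OF po, of X] fin unfolding X_def by (metis (no_types, lifting) empty_iff finite_subset mem_Collect_eq subsetI)
  have zA: "z \<in> A" "le y z" "le z x" "y \<noteq> z" using z unfolding X_def by auto
  have "covers A le z y"
    unfolding covers_def
  proof (intro conjI y zA notI)
    assume "\<exists>w\<in>A. le y w \<and> y \<noteq> w \<and> le w z \<and> w \<noteq> z"
    then obtain w where w: "w\<in>A" "le y w" "y \<noteq> w" "le w z" "w \<noteq> z" by blast
    have "le w x" using po_trans[OF po, of w z x] w zA x by auto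
    then have "w \<in> X" unfolding X_def using w by auto
    then show False using z w by auto
  qed
  then show ?thesis using zA by blast
qed

lemma mi_above:
  assumes po: "is_partial_order A le" and fin: "finite A"
    and mi: "meet_irreducible A le m" and c: "covers A le c m"
    and y: "y \<in> A" "le m y" "m \<noteq> y"
  shows "le c y"
proof -
  have mA: "m \<in> A" using mi unfolding meet_irreducible_def by auto
  obtain z where z: "covers A le z m" "le z y" using cover_above[OF po fin y(1) mA y(2,3)] by blast
  have "z = c" using mi z c unfolding meet_irreducible_def by blast
  then show ?thesis using z by simp
qed

lemma sub_lattice:
  assumes fl: "finite_lattice A le" and SA: "S \<subseteq> A" and tS: "t \<in> S" and top: "\<forall>x\<in>A. le x t"
    and mc: "\<And>x y i. x\<in>S \<Longrightarrow> y\<in>S \<Longrightarrow> i\<in>A \<Longrightarrow> le i x \<Longrightarrow> le i y \<Longrightarrow>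
              (\<forall>u\<in>A. le u x \<and> le u y \<longrightarrow> le u i) \<Longrightarrow> i \<in> S"
  shows "finite_lattice S le"
proof -
  have fin: "finite A" and po: "is_partial_order A le" and lat: "is_lattice A le"
    using fl unfolding finite_lattice_def is_lattice_def by auto
  have latM: "\<And>x y. x\<in>A \<Longrightarrow> y\<in>A \<Longrightarrow> \<exists>i\<in>A. le i x \<and> le i y \<and> (\<forall>u\<in>A. le u x \<and> le u y \<longrightarrow> le u i)"
    using lat unfolding is_lattice_def by blast
  have poS: "is_partial_order S le" using po SA unfolding is_partial_order_def by blast
  have finS: "finite S" using fin SA finite_subset by blast
  have M: "\<forall>x\<in>S. \<forall>y\<in>S. \<exists>i\<in>S. le i x \<and> le i y \<and> (\<forall>u\<in>S. le u x \<and> le u y \<longrightarrow> le u i)"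
  proof (intro ballI)
    fix x y assume xy: "x\<in>S" "y\<in>S"
    then obtain i where i: "i\<in>A" "le i x" "le i y" "\<forall>u\<in>A. le u x \<and> le u y \<longrightarrow> le u i"
      using latM SA by blast
    have "i \<in> S" using mc[OF xy i] .
    then show "\<exists>i\<in>S. le i x \<and> le i y \<and> (\<forall>u\<in>S. le u x \<and> le u y \<longrightarrow> le u i)" using i SA by blast
  qed
  have J: "\<forall>x\<in>S. \<forall>y\<in>S. \<exists>s\<in>S. le x s \<and> le y s \<and> (\<forall>u\<in>S. le x u \<and> le y u \<longrightarrow> le s u)"
  proof (intro ballI)
    fix x y assume xy: "x\<in>S" "y\<in>S"
    define U where "U = {u\<in>S. le x u \<and> le y u}"
    have "t \<in> U" unfolding U_def using tS top xy SA by auto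
    then obtain s where s: "s\<in>U" "\<forall>w\<in>U. le w s \<longrightarrow> w = s"
      using po_min[OF poS, of U] finS unfolding U_def
      by (metis (no_types, lifting) empty_iff finite_subset mem_Collect_eq subsetI)
    have sS: "s \<in> S" "le x s" "le y s" using s unfolding U_def by auto
    have "\<forall>u\<in>S. le x u \<and> le y u \<longrightarrow> le s u"
    proof (intro ballI impI)
      fix u assume u: "u \<in> S" "le x u \<and> le y u"
      obtain i where i: "i\<in>S" "le i s" "le i u" "\<forall>v\<in>S. le v s \<and> le v u \<longrightarrow> le v i"
        using M sS u by blast
      have "le x i" "le y i" using i(4) sS u xy by auto
      then have "i \<in> U" unfolding U_def using i by auto
      then have "i = s" using s i by auto
      then show "le s u" using i by simp
    qed
    then show "\<exists>s\<in>S. le x s \<and> le y s \<and> (\<forall>u\<in>S. le x u \<and> le y u \<longrightarrow> le s u)" using sS by blast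
  qed
  show ?thesis unfolding finite_lattice_def is_lattice_def using finS poS M J by blast
qed


lemma fl_facts:
  assumes "finite_lattice A le"
  shows fl_fin: "finite A" and fl_po: "is_partial_order A le"
    and fl_J: "\<And>x y. x\<in>A \<Longrightarrow> y\<in>A \<Longrightarrow> \<exists>s\<in>A. le x s \<and> le y s \<and> (\<forall>u\<in>A. le x u \<and> le y u \<longrightarrow> le s u)"
    and fl_M: "\<And>x y. x\<in>A \<Longrightarrow> y\<in>A \<Longrightarrow> \<exists>i\<in>A. le i x \<and> le i y \<and> (\<forall>u\<in>A. le u x \<and> le u y \<longrightarrow> le u i)"
  using assms unfolding finite_lattice_def is_lattice_def by blast+

lemma bottom_ex:
  assumes fl: "finite_lattice A le" and ne: "A \<noteq> {}"
  shows "\<exists>b\<in>A. \<forall>x\<in>A. le b x"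
proof -
  note po = fl_po[OF fl]
  obtain b where b: "b\<in>A" "\<forall>y\<in>A. le y b \<longrightarrow> y = b"
    using po_min[OF po fl_fin[OF fl] ne] by blast
  have "\<forall>x\<in>A. le b x"
  proof
    fix x assume x: "x\<in>A"
    obtain i where i: "i\<in>A" "le i b" "le i x" using fl_M[OF fl b(1) x] by blast
    then show "le b x" using b by auto
  qed
  then show ?thesis using b by blast
qed

lemma top_ex:
  assumes fl: "finite_lattice A le" and ne: "A \<noteq> {}"
  shows "\<exists>t\<in>A. \<forall>x\<in>A. le x t"
proof -
  note po = fl_po[OF fl]
  obtain b where b: "b\<in>A" "\<forall>y\<in>A. le b y \<longrightarrow> y = b"
    using po_max[OF po fl_fin[OF fl] ne] by blast
  have "\<forall>x\<in>A. le x b"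
  proof
    fix x assume x: "x\<in>A"
    obtain i where i: "i\<in>A" "le b i" "le x i" using fl_J[OF fl b(1) x] by blast
    then show "le x b" using b by auto
  qed
  then show ?thesis using b by blast
qed

lemma atom_ji:
  assumes fl: "finite_lattice A le" and b: "b\<in>A" "\<forall>x\<in>A. le b x" and x: "x\<in>A" "x \<noteq> b"
  shows "\<exists>j. join_irreducible A le j \<and> le j x"
proof -
  note po = fl_po[OF fl]
  obtain z where z: "covers A le z b" "le z x"
    using cover_above[OF po fl_fin[OF fl] x(1) b(1) bspec[OF b(2) x(1)] x(2)[symmetric]] by blast
  have "\<And>y. covers A le z y \<Longrightarrow> y = b"
  proof -
    fix y assume y: "covers A le z y"
    show "y = b"
    proof (rule ccontr)
      assume "y \<noteq> b"
      then show False using y z b unfolding covers_def by blast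
    qed
  qed
  moreover have "z \<in> A" using z(1) unfolding covers_def by blast
  ultimately have "join_irreducible A le z" using z(1) unfolding join_irreducible_def by blast
  then show ?thesis using z by blast
qed

lemma remove_mc:
  assumes po: "is_partial_order L le" and fin: "finite L"
    and Rmi: "\<forall>m\<in>R. meet_irreducible L le m"
    and x: "x\<in>L" "x\<notin>R" and y: "y\<in>L" "y\<notin>R" and i: "i\<in>L" "le i x" "le i y"
    and glb: "\<forall>u\<in>L. le u x \<and> le u y \<longrightarrow> le u i"
  shows "i \<notin> R"
proof
  assume iR: "i \<in> R"
  then have mi: "meet_irreducible L le i" using Rmi by blast
  then obtain c where c: "covers L le c i" unfolding meet_irreducible_def by blast
  have "i \<noteq> x" "i \<noteq> y" using iR x y by auto
  then have "le c x" "le c y" using mi_above[OF po fin mi c] x y i by auto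
  then have "le c i" using glb c unfolding covers_def by blast
  then show False using c po_antisym[OF po] unfolding covers_def by blast
qed

lemma remove_mi_ji:
  assumes po: "is_partial_order L le" and fin: "finite L"
    and RL: "R \<subseteq> L" and Rmi: "\<forall>m\<in>R. meet_irreducible L le m" and S: "S = L - R"
    and cov: "\<forall>m\<in>R. \<forall>c. covers L le c m \<longrightarrow> c \<notin> R"
    and xS: "x \<in> S" and xc: "\<forall>m\<in>R. \<not> covers L le x m"
    and ji: "join_irreducible S le x"
  shows "join_irreducible L le x"
proof -
  obtain d where d: "covers S le x d" and du: "\<And>y. covers S le x y \<Longrightarrow> y = d"
    using ji unfolding join_irreducible_def by blast
  have dS: "d \<in> S" "le d x" "d \<noteq> x" using d unfolding covers_def by auto
  have xL: "x \<in> L" using xS S by auto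
  have dL: "d \<in> L" using dS S by auto
  have cL: "covers L le x d"
    unfolding covers_def
  proof (intro conjI xL dL dS notI)
    assume "\<exists>z\<in>L. le d z \<and> d \<noteq> z \<and> le z x \<and> z \<noteq> x"
    then obtain z where z: "z\<in>L" "le d z" "d \<noteq> z" "le z x" "z \<noteq> x" by blast
    show False
    proof (cases "z \<in> R")
      case False
      then show False using d z S unfolding covers_def by blast
    next
      case True
      then have mi: "meet_irreducible L le z" using Rmi by blast
      then obtain c where c: "covers L le c z" unfolding meet_irreducible_def by blast
      have cx: "le c x" using mi_above[OF po fin mi c xL z(4) z(5)] .
      have cL: "c \<in> L" "c \<notin> R" using c cov True unfolding covers_def by auto
      have cnx: "c \<noteq> x" using xc True c by auto
      have dc: "le d c" using po_trans[OF po, of d z c] z dL cL c unfolding covers_def by auto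
      have dnc: "d \<noteq> c"
      proof
        assume "d = c"
        then have "le c z" using z by simp
        then show False using c po_antisym[OF po] unfolding covers_def by blast
      qed
      have "c \<in> S" using cL S by auto
      then show False using d dc dnc cx cnx unfolding covers_def by blast
    qed
  qed
  have "\<And>y. covers L le x y \<Longrightarrow> y = d"
  proof -
    fix y assume y: "covers L le x y"
    have "y \<notin> R" using y xc by blast
    then have "covers S le x y" using y S xS unfolding covers_def by auto
    then show "y = d" using du by blast
  qed
  then show ?thesis using cL xL unfolding join_irreducible_def by blast
qed

lemma no_smaller:
  assumes min: "min_counterexample L le" and ce: "counterexample S le" and lt: "card S < card L"
  shows False
proof -
  obtain B :: "nat set" and leB where B: "counterexample B leB" "card B = card S"
    using transfer_ce[OF ce] by blast
  have "\<forall>(B::nat set) leB. counterexample B leB \<longrightarrow> card L \<le> card B"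
    using min unfolding min_counterexample_def by blast
  then have "card L \<le> card B" using B(1) by blast
  then show False using B(2) lt by simp
qed


lemma bot_not_mi:
  assumes min: "min_counterexample L le" and b: "b\<in>L" "\<forall>x\<in>L. le b x"
  shows "\<not> meet_irreducible L le b"
proof
  assume mib: "meet_irreducible L le b"
  have ce: "counterexample L le" using min unfolding min_counterexample_def by blast
  have fl: "finite_lattice L le" and c1: "1 < card L"
    and ceJ: "\<And>j. join_irreducible L le j \<Longrightarrow> card L < 2 * card (up_set L le j)"
    using ce unfolding counterexample_def by auto
  note po = fl_po[OF fl] and fin = fl_fin[OF fl]
  obtain a where a: "covers L le a b" using mib unfolding meet_irreducible_def by blast
  have aL: "a \<in> L" "a \<noteq> b" using a unfolding covers_def by auto
  obtain t where t: "t\<in>L" "\<forall>x\<in>L. le x t" using top_ex[OF fl] b by blast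
  define S where "S = L - {b}"
  have tb: "t \<noteq> b" using t b aL po_antisym[OF po] by metis
  have cardS: "card S = card L - 1" unfolding S_def using b fin by simp
  have flS: "finite_lattice S le"
  proof (rule sub_lattice[OF fl _ _ t(2)])
    show "S \<subseteq> L" unfolding S_def by auto
    show "t \<in> S" unfolding S_def using t tb by auto
    fix x y i assume "x\<in>S" "y\<in>S" "i\<in>L" "le i x" "le i y" "\<forall>u\<in>L. le u x \<and> le u y \<longrightarrow> le u i"
    then show "i \<in> S" using remove_mc[OF po fin, of "{b}" x y i] mib unfolding S_def by auto
  qed
  have jiS: "\<And>x. join_irreducible S le x \<Longrightarrow> card S < 2 * card (up_set S le x)"
  proof -
    fix x assume ji: "join_irreducible S le x"
    have xS: "x \<in> S" using ji unfolding join_irreducible_def by auto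
    have xa: "x \<noteq> a"
    proof
      assume xa: "x = a"
      obtain d where d: "covers S le x d" using ji unfolding join_irreducible_def by blast
      then have "d \<in> L" "d \<noteq> b" "le d a" "d \<noteq> a" using xa unfolding covers_def S_def by auto
      then show False using a b unfolding covers_def by blast
    qed
    have xc: "\<forall>m\<in>{b}. \<not> covers L le x m" using xa a mib unfolding meet_irreducible_def by blast
    have jiL: "join_irreducible L le x"
    proof (rule remove_mi_ji[OF po fin _ _ S_def _ xS xc ji])
      show "{b} \<subseteq> L" using b by simp
      show "\<forall>m\<in>{b}. meet_irreducible L le m" using mib by simp
      show "\<forall>m\<in>{b}. \<forall>c. covers L le c m \<longrightarrow> c \<notin> {b}" unfolding covers_def by auto
    qed
    have "up_set S le x = up_set L le x"
      using xS b po_antisym[OF po] unfolding up_set_def S_def by auto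
    then show "card S < 2 * card (up_set S le x)" using ceJ[OF jiL] cardS by simp
  qed
  have "1 < card S"
  proof (rule ccontr)
    assume "\<not> 1 < card S"
    have finS: "finite S" using fin S_def by auto
    have tS: "t \<in> S" "a \<in> S" using t tb aL unfolding S_def by auto
    then have "card S \<ge> 1" using finS card_0_eq by fastforce
    then have "card S = 1" using \<open>\<not> 1 < card S\<close> by simp
    then obtain u where "S = {u}" using card_1_singletonE by blast
    then have Sa: "S = {t}" "a = t" using tS by auto
    have Lbt: "L = {b, t}" using Sa b unfolding S_def by auto
    have "\<And>y. covers L le t y \<Longrightarrow> y = b" using Lbt unfolding covers_def by auto
    then have "join_irreducible L le t" using a Sa t unfolding join_irreducible_def by blast
    moreover have "up_set L le t = {t}"
    proof -
      have "\<forall>y\<in>L. le t y \<longrightarrow> y = t" using t po_antisym[OF po] by blast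
      then show ?thesis using t po_refl[OF po] unfolding up_set_def by auto
    qed
    ultimately show False using ceJ[of t] Lbt tb by simp
  qed
  then have "counterexample S le" using flS jiS unfolding counterexample_def by blast
  moreover have "card S < card L" using cardS c1 by simp
  ultimately show False using no_smaller[OF min] by blast
qed


lemma cover_case:
  assumes fl: "finite_lattice L le"
    and ceJ: "\<And>j. join_irreducible L le j \<Longrightarrow> card L < 2 * card (up_set L le j)"
    and b: "b\<in>L" "\<forall>x\<in>L. le b x"
    and mi: "meet_irreducible L le m" and m'L: "m' \<in> L"
    and inc: "\<not> le m m'" "\<not> le m' m"
    and c: "covers L le c m" and S: "S = L - {m, m'}" and cardS: "card L = card S + 2"
    and ji: "join_irreducible S le c"
  shows "card S < 2 * card (up_set S le c)"
proof -
  note po = fl_po[OF fl] and fin = fl_fin[OF fl]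
  have mL: "m \<in> L" using mi unfolding meet_irreducible_def by auto
  have cL: "c \<in> L" "le m c" "m \<noteq> c" using c unfolding covers_def by auto
  show ?thesis
  proof (cases "join_irreducible L le m")
    case True
    have up1: "up_set S le c = up_set L le c"
    proof -
      have "\<not> le c m" using cL po_antisym[OF po] mL by blast
      moreover have "\<not> le c m'" using cL po_trans[OF po, of m c m'] mL m'L inc by blast
      ultimately show ?thesis unfolding up_set_def S by auto
    qed
    have up2: "up_set L le m = insert m (up_set L le c)"
    proof
      show "up_set L le m \<subseteq> insert m (up_set L le c)"
      proof
        fix y assume "y \<in> up_set L le m"
        then have y: "y\<in>L" "le m y" unfolding up_set_def by auto
        show "y \<in> insert m (up_set L le c)"
        proof (cases "m = y")
          case False
          then show ?thesis using mi_above[OF po fin mi c y(1) y(2) False] y unfolding up_set_def by auto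
        qed auto
      qed
      show "insert m (up_set L le c) \<subseteq> up_set L le m"
        using po_refl[OF po] po_trans[OF po, of m c] mL cL unfolding up_set_def by auto
    qed
    have "m \<notin> up_set L le c" using cL po_antisym[OF po] mL unfolding up_set_def by auto
    moreover have "finite (up_set L le c)" using fin unfolding up_set_def by auto
    ultimately have "card (up_set L le m) = card (up_set L le c) + 1" using up2 by simp
    then show ?thesis using ceJ[OF True] up1 cardS by simp
  next
    case False
    have mb: "m \<noteq> b" using inc b m'L by auto
    obtain y1 where y1: "covers L le m y1"
      using cover_below[OF po fin mL b(1)] b mb mL by metis
    obtain y2 where y2: "covers L le m y2" "y2 \<noteq> y1"
      using False y1 mL unfolding join_irreducible_def by blast
    obtain d where d: "covers S le c d" and du: "\<And>y. covers S le c y \<Longrightarrow> y = d"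
      using ji unfolding join_irreducible_def by blast
    have poS: "is_partial_order S le" using po unfolding is_partial_order_def S by blast
    have finS: "finite S" using fin S by auto
    have cS: "c \<in> S" using ji unfolding join_irreducible_def by auto
    have below: "\<And>y. covers L le m y \<Longrightarrow> le y d \<and> y \<in> L"
    proof -
      fix y assume y: "covers L le m y"
      have yL: "y \<in> L" "le y m" "y \<noteq> m" using y unfolding covers_def by auto
      have "y \<noteq> m'" using yL inc by auto
      then have yS: "y \<in> S" using yL S by auto
      have yc: "le y c" using po_trans[OF po, of y m c] yL mL cL by auto
      have ync: "y \<noteq> c" using yL cL po_antisym[OF po] mL by auto
      obtain z where "covers S le c z" "le y z" using cover_below[OF poS finS cS yS yc ync] by blast
      then show "le y d \<and> y \<in> L" using du yL by blast
    qed
    have dS: "d \<in> S" "le d c" "d \<noteq> c" using d unfolding covers_def by auto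
    have dL: "d \<in> L" "d \<noteq> m" using dS S by auto
    obtain s where s: "s\<in>L" "le y1 s" "le y2 s" "\<forall>u\<in>L. le y1 u \<and> le y2 u \<longrightarrow> le s u"
      using fl_J[OF fl, of y1 y2] y1 y2 unfolding covers_def by blast
    have sm: "le s m" using s y1 y2 mL unfolding covers_def by blast
    have "s = m"
    proof (rule ccontr)
      assume "s \<noteq> m"
      then have "s = y1" using y1 s sm unfolding covers_def by blast
      moreover have "s = y2" using y2 s sm \<open>s \<noteq> m\<close> unfolding covers_def by blast
      ultimately show False using y2 by simp
    qed
    then have "le m d" using s below y1 y2 dL by blast
    then show ?thesis using c dL dS unfolding covers_def by blast
  qed
qed

lemma incomparable_case:
  assumes min: "min_counterexample L le"
    and mi1: "meet_irreducible L le m1" and mi2: "meet_irreducible L le m2"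
    and inc: "\<not> le m1 m2" "\<not> le m2 m1"
    and H: "\<not> (\<exists>j. join_irreducible L le j \<and> le j m1 \<and> le j m2)"
  shows False
proof -
  have ce: "counterexample L le" using min unfolding min_counterexample_def by blast
  have fl: "finite_lattice L le" and c1: "1 < card L"
    and ceJ: "\<And>j. join_irreducible L le j \<Longrightarrow> card L < 2 * card (up_set L le j)"
    using ce unfolding counterexample_def by auto
  note po = fl_po[OF fl] and fin = fl_fin[OF fl]
  have m1L: "m1 \<in> L" and m2L: "m2 \<in> L" using mi1 mi2 unfolding meet_irreducible_def by auto
  obtain b where b: "b\<in>L" "\<forall>x\<in>L. le b x" using bottom_ex[OF fl] m1L by blast
  obtain t where t: "t\<in>L" "\<forall>x\<in>L. le x t" using top_ex[OF fl] m1L by blast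
  obtain c1 where cv1: "covers L le c1 m1" using mi1 unfolding meet_irreducible_def by blast
  obtain c2 where cv2: "covers L le c2 m2" using mi2 unfolding meet_irreducible_def by blast
  define S where "S = L - {m1, m2}"
  have m12: "m1 \<noteq> m2" using inc po_refl[OF po] m1L by auto
  have cardS: "card L = card S + 2"
  proof -
    have "card S = card L - 2" unfolding S_def using m1L m2L m12 fin by (simp add: card_Diff_subset)
    moreover have "card L \<ge> 2" using m1L m2L m12 fin
      by (metis card_2_iff empty_subsetI insert_subset card_mono)
    ultimately show ?thesis by simp
  qed
  have bS: "b \<in> S" using b inc m1L m2L unfolding S_def by auto
  have tS: "t \<in> S" using t inc m1L m2L unfolding S_def by auto
  have bt: "b \<noteq> t" using b t m1L m2L m12 po_antisym[OF po] by metis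
  have c1R: "c1 \<notin> {m1, m2}" using cv1 inc unfolding covers_def by auto
  have c2R: "c2 \<notin> {m1, m2}" using cv2 inc unfolding covers_def by auto
  have flS: "finite_lattice S le"
  proof (rule sub_lattice[OF fl _ tS t(2)])
    show "S \<subseteq> L" unfolding S_def by auto
    fix x y i assume "x\<in>S" "y\<in>S" "i\<in>L" "le i x" "le i y" "\<forall>u\<in>L. le u x \<and> le u y \<longrightarrow> le u i"
    then show "i \<in> S" using remove_mc[OF po fin, of "{m1,m2}" x y i] mi1 mi2 unfolding S_def by auto
  qed
  have jiS: "\<And>x. join_irreducible S le x \<Longrightarrow> card S < 2 * card (up_set S le x)"
  proof -
    fix x assume ji: "join_irreducible S le x"
    have xS: "x \<in> S" using ji unfolding join_irreducible_def by auto
    show "card S < 2 * card (up_set S le x)"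
    proof (cases "x = c1 \<or> x = c2")
      case True
      then show ?thesis
      proof
        assume "x = c1"
        then show ?thesis using cover_case[OF fl ceJ b mi1 m2L inc cv1 _ cardS] ji S_def by simp
      next
        assume "x = c2"
        then show ?thesis using cover_case[OF fl ceJ b mi2 m1L inc(2) inc(1) cv2 _ cardS] ji S_def
          by (simp add: insert_commute)
      qed
    next
      case False
      have xc: "\<forall>m\<in>{m1,m2}. \<not> covers L le x m"
        using False cv1 cv2 mi1 mi2 unfolding meet_irreducible_def by blast
      have jiL: "join_irreducible L le x"
      proof (rule remove_mi_ji[OF po fin _ _ S_def _ xS xc ji])
        show "{m1, m2} \<subseteq> L" using m1L m2L by simp
        show "\<forall>m\<in>{m1, m2}. meet_irreducible L le m" using mi1 mi2 by simp
        have "\<And>c. covers L le c m1 \<Longrightarrow> c = c1" using mi1 cv1 unfolding meet_irreducible_def by blast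
        moreover have "\<And>c. covers L le c m2 \<Longrightarrow> c = c2" using mi2 cv2 unfolding meet_irreducible_def by blast
        ultimately show "\<forall>m\<in>{m1, m2}. \<forall>c. covers L le c m \<longrightarrow> c \<notin> {m1, m2}"
          using c1R c2R by blast
      qed
      have upeq: "up_set S le x = up_set L le x - {m1, m2}" unfolding up_set_def S_def by auto
      have nboth: "\<not> (m1 \<in> up_set L le x \<and> m2 \<in> up_set L le x)" using H jiL unfolding up_set_def by auto
      have finU: "finite (up_set L le x)" using fin unfolding up_set_def by auto
      have upeq2: "up_set S le x = (up_set L le x - {m1}) - {m2}" using upeq by auto
      obtain m where m: "up_set S le x = up_set L le x - {m}"
      proof (cases "m1 \<in> up_set L le x")
        case True
        then have "up_set S le x = up_set L le x - {m1}" using nboth upeq2 by auto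
        then show ?thesis using that by blast
      next
        case False
        then have "up_set S le x = up_set L le x - {m2}" using upeq2 by auto
        then show ?thesis using that by blast
      qed
      have "card (up_set L le x) - card {m} \<le> card (up_set S le x)"
        unfolding m by (rule diff_card_le_card_Diff) simp
      then have "card (up_set S le x) + 1 \<ge> card (up_set L le x)" by simp
      then show ?thesis using ceJ[OF jiL] cardS by simp
    qed
  qed
  have "1 < card S"
  proof -
    have "{b, t} \<subseteq> S" using bS tS by auto
    moreover have "finite S" using fin S_def by auto
    ultimately have "card {b,t} \<le> card S" using card_mono by blast
    then show ?thesis using bt by simp
  qed
  then have "counterexample S le" using flS jiS unfolding counterexample_def by blast
  moreover have "card S < card L" using cardS by simp
  ultimately show False using no_smaller[OF min] by blast
qed

theorem corollary2p11:
  fixes L :: "'a set" and le :: "'a \<Rightarrow> 'a \<Rightarrow> bool"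
  assumes "min_counterexample L le"
    and "meet_irreducible L le m1" and "meet_irreducible L le m2"
  shows "\<exists>j. join_irreducible L le j \<and> le j m1 \<and> le j m2"
proof (rule ccontr)
  assume H: "\<not> (\<exists>j. join_irreducible L le j \<and> le j m1 \<and> le j m2)"
  have ce: "counterexample L le" using assms(1) unfolding min_counterexample_def by blast
  have fl: "finite_lattice L le" using ce unfolding counterexample_def by auto
  note po = fl_po[OF fl]
  have m1L: "m1 \<in> L" and m2L: "m2 \<in> L" using assms(2,3) unfolding meet_irreducible_def by auto
  obtain b where b: "b\<in>L" "\<forall>x\<in>L. le b x" using bottom_ex[OF fl] m1L by blast
  have nb: "\<And>m. meet_irreducible L le m \<Longrightarrow> m \<in> L \<Longrightarrow> \<exists>j. join_irreducible L le j \<and> le j m"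
  proof -
    fix m assume "meet_irreducible L le m" "m \<in> L"
    then have "m \<noteq> b" using bot_not_mi[OF assms(1) b] by blast
    then show "\<exists>j. join_irreducible L le j \<and> le j m" using atom_ji[OF fl b \<open>m \<in> L\<close>] by blast
  qed
  show False
  proof (cases "le m1 m2 \<or> le m2 m1")
    case True
    then show False
    proof
      assume "le m1 m2"
      obtain j where "join_irreducible L le j" "le j m1" using nb assms(2) m1L by blast
      moreover then have "le j m2" using po_trans[OF po, of j m1 m2] m1L m2L \<open>le m1 m2\<close>
        unfolding join_irreducible_def by blast
      ultimately show False using H by blast
    next
      assume "le m2 m1"
      obtain j where "join_irreducible L le j" "le j m2" using nb assms(3) m2L by blast
      moreover then have "le j m1" using po_trans[OF po, of j m2 m1] m1L m2L \<open>le m2 m1\<close>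
        unfolding join_irreducible_def by blast
      ultimately show False using H by blast
    qed
  next
    case False
    then show False using incomparable_case[OF assms(1,2,3) _ _ H] by blast
  qed
qed

end
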